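(* Let $1\le p_1,p_2\le\infty$, $p_3\ge1$, $\phi\in L^1(\mathbb R)$ and $M\in\tilde{\mathcal M}_{(p_1,p_2,p_3)}(\mathbb R)$. Then $m(\xi,\eta)=M(\xi-\eta)\hat\phi(\xi+\eta)$ belongs to $\mathcal{BM}_{(p_1,p_2,p_3)}(\mathbb R)$ and $\|m\|_{p_1,p_2,p_3}\le\|\phi\|_1\|M\|_{p_1,p_2,p_3}$.
   Context: The Fourier transform is $\hat f(\xi)=\int_{\mathbb R}f(x)e^{-2\pi i x\xi}dx$. $\mathcal P(\mathbb R)$ denotes the set of Schwartz functions on $\mathbb R$ whose Fourier transform is continuous with compact support. For $1\le p_1,p_2\le\infty$, $0<p_3\le\infty$ and $m\in L^1_{loc}(\mathbb R^2)$, set, for $f,g\in\mathcal P(\mathbb R)$, $B_m(f,g)(x)=\int_{\mathbb R}\int_{\mathbb R}\hat f(\xi)\hat g(\eta)m(\xi,\eta)e^{2\pi i(\xi+\eta)x}d\xi\,d\eta$; $m\in\mathcal{BM}_{(p_1,p_2,p_3)}(\mathbb R)$ means $\|B_m(f,g)\|_{p_3}\le C\|f\|_{p_1}\|g\|_{p_2}$ for some $C$ and all $f,g\in\mathcal P(\mathbb R)$, and $\|m\|_{p_1,p_2,p_3}$ is the smallest such $C$. $\tilde{\mathcal M}_{(p_1,p_2,p_3)}(\mathbb R)$ is the set of measurable (locally integrable) $M:\mathbb R\to\mathbb C$ such that $(\xi,\eta)\mapsto M(\xi-\eta)$ belongs to $\mathcal{BM}_{(p_1,p_2,p_3)}(\mathbb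 R)$, and $\|M\|_{p_1,p_2,p_3}$ is the corresponding norm. *)

theory Defs
  imports "HOL-Analysis.Analysis"
begin

definition fourier :: "(real \<Rightarrow> complex) \<Rightarrow> real \<Rightarrow> complex" where
  "fourier f \<xi> = (LINT x|lebesgue. f x * cis (- 2 * pi * x * \<xi>))"

definition schwartz :: "(real \<Rightarrow> complex) \<Rightarrow> bool" where
  "schwartz f \<longleftrightarrow> (\<exists>D :: nat \<Rightarrow> real \<Rightarrow> complex.
      D 0 = f \<and>
      (\<forall>k x. (D k has_vector_derivative D (Suc k) x) (at x)) \<and>
      (\<forall>j k. bounded (range (\<lambda>x. complex_of_real (x ^ j) * D k x))))"

definition classP :: "(real \<Rightarrow> complex) set" where
  "classP = {f. schwartz f \<and> continuous_on UNIV (fourier f) \<and>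
                 compact (closure {\<xi>. fourier f \<xi> \<noteq> 0})}"

definition Lp_norm :: "ennreal \<Rightarrow> (real \<Rightarrow> complex) \<Rightarrow> ennreal" where
  "Lp_norm p f =
     (if p = \<infinity> then Inf {C. AE x in lebesgue. ennreal (norm (f x)) \<le> C}
      else (let I = (\<integral>\<^sup>+ x. ennreal (norm (f x) powr enn2real p) \<partial>lebesgue)
            in if I = \<infinity> then \<infinity> else ennreal (enn2real I powr (1 / enn2real p))))"

definition loc_int1 :: "(real \<Rightarrow> complex) \<Rightarrow> bool" where
  "loc_int1 M \<longleftrightarrow> M \<in> borel_measurable lebesgue \<and>
     (\<forall>K. compact K \<longrightarrow> set_integrable lebesgue K M)"

definition loc_int2 :: "(real \<times> real \<Rightarrow> complex) \<Rightarrow> bool" where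
  "loc_int2 m \<longleftrightarrow> m \<in> borel_measurable lebesgue \<and>
     (\<forall>K. compact K \<longrightarrow> set_integrable lebesgue K m)"

definition bilin_op :: "(real \<times> real \<Rightarrow> complex) \<Rightarrow> (real \<Rightarrow> complex) \<Rightarrow> (real \<Rightarrow> complex)
    \<Rightarrow> real \<Rightarrow> complex" where
  "bilin_op m f g x = (LINT \<eta>|lebesgue. LINT \<xi>|lebesgue.
      fourier f \<xi> * fourier g \<eta> * m (\<xi>, \<eta>) * cis (2 * pi * (\<xi> + \<eta>) * x))"

definition bm_bound :: "ennreal \<Rightarrow> ennreal \<Rightarrow> ennreal \<Rightarrow> (real \<times> real \<Rightarrow> complex) \<Rightarrow> real \<Rightarrow> bool" where
  "bm_bound p1 p2 p3 m C \<longleftrightarrow> (\<forall>f\<in>classP. \<forall>g\<in>classP.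
      Lp_norm p3 (bilin_op m f g) \<le> ennreal C * Lp_norm p1 f * Lp_norm p2 g)"

definition BM :: "ennreal \<Rightarrow> ennreal \<Rightarrow> ennreal \<Rightarrow> (real \<times> real \<Rightarrow> complex) set" where
  "BM p1 p2 p3 = {m. loc_int2 m \<and> (\<exists>C. bm_bound p1 p2 p3 m C)}"

definition bm_norm :: "ennreal \<Rightarrow> ennreal \<Rightarrow> ennreal \<Rightarrow> (real \<times> real \<Rightarrow> complex) \<Rightarrow> real" where
  "bm_norm p1 p2 p3 m = Inf {C. C \<ge> 0 \<and> bm_bound p1 p2 p3 m C}"

definition Mtilde :: "ennreal \<Rightarrow> ennreal \<Rightarrow> ennreal \<Rightarrow> (real \<Rightarrow> complex) set" where
  "Mtilde p1 p2 p3 = {M. loc_int1 M \<and> (\<lambda>(\<xi>, \<eta>). M (\<xi> - \<eta>)) \<in> BM p1 p2 p3}"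

definition mtilde_norm :: "ennreal \<Rightarrow> ennreal \<Rightarrow> ennreal \<Rightarrow> (real \<Rightarrow> complex) \<Rightarrow> real" where
  "mtilde_norm p1 p2 p3 M = bm_norm p1 p2 p3 (\<lambda>(\<xi>, \<eta>). M (\<xi> - \<eta>))"

end

theory Submission
  imports Defs
begin

lemma powr_tangent:
  fixes q T x :: real
  assumes q: "1 \<le> q" and T: "0 < T" and x: "0 \<le> x"
  shows "T powr q + q * T powr (q - 1) * (x - T) \<le> x powr q"
proof (cases "x = 0")
  case True
  have "T powr q = T * T powr (q - 1)"
    using T by (simp add: powr_mult_base)
  then have "T powr q + q * T powr (q - 1) * (0 - T) = (1 - q) * T powr q"
    by (simp add: algebra_simps)
  also have "\<dots> \<le> 0" using q by (simp add: mult_nonpos_nonneg)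
  finally show ?thesis using True by simp
next
  case False
  with x have xp: "x > 0" by simp
  have "q * T powr (q - 1) * (x - T) \<le> x powr q - T powr q"
  proof (rule convex_on_imp_above_tangent[where A="{0<..}"])
    show "convex_on {0<..} (\<lambda>x. x powr q)" using powr_convex[OF q] .
    show "connected {0::real<..}" by simp
    show "T \<in> interior {0<..}" using T by (simp add: interior_open)
    show "x \<in> {0<..}" using xp by simp
    show "((\<lambda>x. x powr q) has_field_derivative q * T powr (q - 1)) (at T within {0<..})"
      using has_real_derivative_powr[OF T] by (rule has_field_derivative_at_within)
  qed
  then show ?thesis by simp
qed

lemma jensen_powr:
  fixes a t :: "real \<Rightarrow> real" and q :: real
  assumes q: "1 \<le> q" and a0: "\<And>y. 0 \<le> a y" and t0: "\<And>y. 0 \<le> t y"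
    and ia: "integrable lborel a" and iat: "integrable lborel (\<lambda>y. a y * t y)"
    and iatq: "integrable lborel (\<lambda>y. a y * t y powr q)"
    and Np: "0 < (\<integral>y. a y \<partial>lborel)"
  shows "(\<integral>y. a y * t y \<partial>lborel) powr q \<le> (\<integral>y. a y \<partial>lborel) powr (q - 1) * (\<integral>y. a y * t y powr q \<partial>lborel)"
proof -
  define N where "N = (\<integral>y. a y \<partial>lborel)"
  define S where "S = (\<integral>y. a y * t y \<partial>lborel)"
  define T where "T = S / N"
  have S0: "0 \<le> S" unfolding S_def using a0 t0 by (intro integral_nonneg_AE) auto
  have R0: "0 \<le> (\<integral>y. a y * t y powr q \<partial>lborel)" using a0 t0 by (intro integral_nonneg_AE) auto
  have N: "0 < N" using Np N_def by simp
  show ?thesis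
  proof (cases "S = 0")
    case True
    then show ?thesis using q R0 S_def by simp
  next
    case False
    then have T: "0 < T" using S0 N by (simp add: T_def)
    define c where "c = q * T powr (q - 1)"
    have "(\<integral>y. a y * (T powr q + c * (t y - T)) \<partial>lborel) \<le> (\<integral>y. a y * t y powr q \<partial>lborel)"
    proof (rule integral_mono)
      show "integrable lborel (\<lambda>y. a y * (T powr q + c * (t y - T)))"
        using ia iat by (simp add: algebra_simps)
      show "integrable lborel (\<lambda>y. a y * t y powr q)" by fact
      fix y show "a y * (T powr q + c * (t y - T)) \<le> a y * t y powr q"
        using powr_tangent[OF q T t0[of y]] a0[of y] by (intro mult_left_mono) (auto simp: c_def)
    qed
    also have "(\<integral>y. a y * (T powr q + c * (t y - T)) \<partial>lborel)
       = (T powr q - c * T) * N + c * S"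
    proof -
      have "(\<lambda>y. a y * (T powr q + c * (t y - T))) = (\<lambda>y. (T powr q - c * T) * a y + c * (a y * t y))"
        by (auto simp: algebra_simps)
      then show ?thesis using ia iat by (simp add: N_def S_def)
    qed
    also have "c * S = c * T * N" using N by (simp add: T_def)
    finally have key: "T powr q * N \<le> (\<integral>y. a y * t y powr q \<partial>lborel)" by (simp add: algebra_simps)
    have "S powr q = (T * N) powr q" using N by (simp add: T_def)
    also have "\<dots> = T powr q * N powr q" using T N by (simp add: powr_mult)
    also have "N powr q = N powr (q - 1) * N" using N by (simp add: powr_mult_base mult.commute)
    finally have "S powr q = N powr (q - 1) * (T powr q * N)" by simp
    also have "\<dots> \<le> N powr (q - 1) * (\<integral>y. a y * t y powr q \<partial>lborel)"
      using key by (intro mult_left_mono) auto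
    finally show ?thesis by (simp add: S_def N_def)
  qed
qed

lemma conv_Lp_bound:
  fixes \<phi> h :: "real \<Rightarrow> complex" and H :: real and p :: ennreal
  assumes \<phi>m[measurable]: "\<phi> \<in> borel_measurable borel" and \<phi>i: "integrable lborel \<phi>"
    and hm[measurable]: "h \<in> borel_measurable borel" and hb: "\<And>x. norm (h x) \<le> H"
    and p: "1 \<le> p"
  shows "Lp_norm p (\<lambda>x. \<integral>y. \<phi> y * h (x - y) \<partial>lborel)
          \<le> ennreal (\<integral>y. norm (\<phi> y) \<partial>lborel) * Lp_norm p h"
proof -
  define N where "N = (\<integral>y. norm (\<phi> y) \<partial>lborel)"
  define cv where "cv = (\<lambda>x. \<integral>y. \<phi> y * h (x - y) \<partial>lborel)"
  have H0: "0 \<le> H" using hb[of 0] norm_ge_zero order_trans by blast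
  have N0: "0 \<le> N" unfolding N_def by simp
  have inorm: "integrable lborel (\<lambda>y. norm (\<phi> y))" using \<phi>i by simp
  have iat: "integrable lborel (\<lambda>y. norm (\<phi> y) * norm (h (x - y)))" for x
    by (rule Bochner_Integration.integrable_bound[OF integrable_mult_right[OF inorm, of H]])
       (use H0 in \<open>auto intro!: AE_I2 mult_left_mono hb simp: abs_mult mult.commute[of H]\<close>)
  have iconv: "integrable lborel (\<lambda>y. \<phi> y * h (x - y))" for x
    by (rule Bochner_Integration.integrable_bound[OF iat[of x]]) (auto simp: norm_mult)
  have cvb: "norm (cv x) \<le> (\<integral>y. norm (\<phi> y) * norm (h (x - y)) \<partial>lborel)" for x
    unfolding cv_def using integral_norm_bound[of lborel "\<lambda>y. \<phi> y * h (x - y)"]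
    by (simp add: norm_mult)
  have cvbN: "norm (cv x) \<le> N * H" for x
  proof -
    have "(\<integral>y. norm (\<phi> y) * norm (h (x - y)) \<partial>lborel) \<le> (\<integral>y. norm (\<phi> y) * H \<partial>lborel)"
      by (rule integral_mono[OF iat]) (auto intro!: mult_left_mono hb simp: inorm)
    then show ?thesis using cvb[of x] by (simp add: N_def)
  qed
  have nnN: "(\<integral>\<^sup>+y. ennreal (norm (\<phi> y)) \<partial>lborel) = ennreal N"
    unfolding N_def by (rule nn_integral_eq_integral[OF inorm]) auto
  show ?thesis
  proof (cases "p = top")
    case True
    define S2 where "S2 = {C. AE x in lebesgue. ennreal (norm (h x)) \<le> C}"
    have "top \<in> S2" by (simp add: S2_def)
    then obtain f :: "nat \<Rightarrow> ennreal" where f: "decseq f" "range f \<subseteq> S2" "Inf S2 = (INF i. f i)"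
      using ennreal_Inf_countable_INF[of S2] by blast
    have "AE x in lebesgue. \<forall>i. ennreal (norm (h x)) \<le> f i"
      using f(2) unfolding AE_all_countable S2_def by auto
    then have "AE x in lebesgue. ennreal (norm (h x)) \<le> Inf S2"
      unfolding f(3) by eventually_elim (auto intro: INF_greatest)
    then have aeC: "AE x in lborel. ennreal (norm (h x)) \<le> Inf S2"
      by (simp add: AE_completion_iff)
    have "ennreal (norm (cv x)) \<le> ennreal N * Inf S2" for x
    proof -
      have ae2: "AE y in lborel. ennreal (norm (h (x + (-1) * y))) \<le> Inf S2"
        by (rule AE_borel_affine[OF _ _ aeC]) auto
      have "ennreal (norm (cv x)) \<le> ennreal (\<integral>y. norm (\<phi> y) * norm (h (x - y)) \<partial>lborel)"
        using cvb by (rule ennreal_leI)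
      also have "\<dots> = (\<integral>\<^sup>+y. ennreal (norm (\<phi> y) * norm (h (x - y))) \<partial>lborel)"
        by (rule nn_integral_eq_integral[symmetric, OF iat]) auto
      also have "\<dots> \<le> (\<integral>\<^sup>+y. ennreal (norm (\<phi> y)) * Inf S2 \<partial>lborel)"
        using ae2 by (intro nn_integral_mono_AE) (auto simp: ennreal_mult intro!: mult_left_mono)
      also have "\<dots> = ennreal N * Inf S2"
        by (subst nn_integral_multc) (auto simp: nnN)
      finally show ?thesis .
    qed
    then have "ennreal N * Inf S2 \<in> {C. AE x in lebesgue. ennreal (norm (cv x)) \<le> C}" by auto
    then have "Inf {C. AE x in lebesgue. ennreal (norm (cv x)) \<le> C} \<le> ennreal N * Inf S2"
      by (rule Inf_lower)
    then show ?thesis using True by (simp add: Lp_norm_def cv_def[symmetric] S2_def N_def)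
  next
    case False
    define q where "q = enn2real p"
    have pq: "p = ennreal q" using False by (simp add: q_def ennreal_enn2real_if)
    have q1: "1 \<le> q" using enn2real_mono[OF p] False by (simp add: q_def top.not_eq_extremum)
    define Ih where "Ih = (\<integral>\<^sup>+ x. ennreal (norm (h x) powr q) \<partial>lborel)"
    define Ik where "Ik = (\<integral>\<^sup>+ x. ennreal (norm (cv x) powr q) \<partial>lborel)"
    have Lh: "Lp_norm p h = (if Ih = \<infinity> then \<infinity> else ennreal (enn2real Ih powr (1 / q)))"
      using False by (simp add: Lp_norm_def Ih_def q_def nn_integral_completion Let_def)
    have Lk: "Lp_norm p cv = (if Ik = \<infinity> then \<infinity> else ennreal (enn2real Ik powr (1 / q)))"
      using False by (simp add: Lp_norm_def Ik_def q_def nn_integral_completion Let_def)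
    show ?thesis
    proof (cases "N = 0")
      case True
      then have "cv x = 0" for x using cvbN[of x] by simp
      then have "Ik = 0" using q1 by (simp add: Ik_def)
      then show ?thesis using Lk by (simp add: cv_def)
    next
      case False
      then have Np: "0 < N" using N0 by simp
      have pw: "ennreal (norm (cv x) powr q) \<le> ennreal (N powr (q - 1)) *
                 (\<integral>\<^sup>+y. ennreal (norm (\<phi> y) * norm (h (x - y)) powr q) \<partial>lborel)" for x
      proof -
        have iatq: "integrable lborel (\<lambda>y. norm (\<phi> y) * norm (h (x - y)) powr q)"
          by (rule Bochner_Integration.integrable_bound[OF integrable_mult_right[OF inorm, of "H powr q"]])
             (use q1 in \<open>auto simp: mult.commute intro!: mult_left_mono powr_mono2 hb\<close>)
        have "norm (cv x) powr q \<le> (\<integral>y. norm (\<phi> y) * norm (h (x - y)) \<partial>lborel) powr q"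
          using cvb q1 by (intro powr_mono2) auto
        also have "\<dots> \<le> N powr (q - 1) * (\<integral>y. norm (\<phi> y) * norm (h (x - y)) powr q \<partial>lborel)"
          unfolding N_def
          by (rule jensen_powr[OF q1 _ _ inorm iat iatq]) (use Np N_def in auto)
        finally have "ennreal (norm (cv x) powr q) \<le> ennreal (N powr (q - 1) * (\<integral>y. norm (\<phi> y) * norm (h (x - y)) powr q \<partial>lborel))"
          by (rule ennreal_leI)
        also have "\<dots> = ennreal (N powr (q - 1)) * (\<integral>\<^sup>+y. ennreal (norm (\<phi> y) * norm (h (x - y)) powr q) \<partial>lborel)"
          by (subst nn_integral_eq_integral[OF iatq]) (auto simp: ennreal_mult)
        finally show ?thesis .
      qed
      have shift: "(\<integral>\<^sup>+x. ennreal (norm (h (x - y)) powr q) \<partial>lborel) = Ih" for y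
      proof -
        have "Ih = ennreal \<bar>1\<bar> * (\<integral>\<^sup>+x. ennreal (norm (h (- y + 1 * x)) powr q) \<partial>lborel)"
          unfolding Ih_def by (rule nn_integral_real_affine) auto
        then show ?thesis by simp
      qed
      have "Ik \<le> (\<integral>\<^sup>+x. ennreal (N powr (q - 1)) *
                 (\<integral>\<^sup>+y. ennreal (norm (\<phi> y) * norm (h (x - y)) powr q) \<partial>lborel) \<partial>lborel)"
        unfolding Ik_def by (intro nn_integral_mono pw)
      also have "\<dots> = ennreal (N powr (q - 1)) *
                 (\<integral>\<^sup>+x. (\<integral>\<^sup>+y. ennreal (norm (\<phi> y) * norm (h (x - y)) powr q) \<partial>lborel) \<partial>lborel)"
        by (rule nn_integral_cmult) measurable
      also have "(\<integral>\<^sup>+x. (\<integral>\<^sup>+y. ennreal (norm (\<phi> y) * norm (h (x - y)) powr q) \<partial>lborel) \<partial>lborel)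
          = (\<integral>\<^sup>+y. (\<integral>\<^sup>+x. ennreal (norm (\<phi> y) * norm (h (x - y)) powr q) \<partial>lborel) \<partial>lborel)"
        by (rule lborel_pair.Fubini'[symmetric]) measurable
      also have "\<dots> = (\<integral>\<^sup>+y. ennreal (norm (\<phi> y)) * Ih \<partial>lborel)"
        by (intro nn_integral_cong) (auto simp: ennreal_mult nn_integral_cmult shift)
      also have "\<dots> = ennreal N * Ih"
        by (subst nn_integral_multc) (auto simp: nnN)
      finally have IkIh: "Ik \<le> ennreal (N powr (q - 1)) * (ennreal N * Ih)" .
      have NN: "N powr (q - 1) * N = N powr q"
        using Np by (simp add: powr_mult_base mult.commute)
      have IkIh': "Ik \<le> ennreal (N powr q) * Ih"
      proof -
        have "ennreal (N powr (q - 1)) * (ennreal N * Ih) = ennreal (N powr q) * Ih"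
          using Np by (simp add: mult.assoc[symmetric] ennreal_mult'[symmetric] NN)
        then show ?thesis using IkIh by simp
      qed
      show ?thesis
      proof (cases "Ih = \<infinity>")
        case True
        then show ?thesis using Lh Np by (simp add: cv_def[symmetric] N_def[symmetric] ennreal_mult_top)
      next
        case IhF: False
        have IkF: "Ik \<noteq> \<infinity>"
          using IkIh' IhF by (metis ennreal_mult_less_top ennreal_neq_top infinity_ennreal_def top.not_eq_extremum order_le_less_trans top_greatest neq_top_trans)
        have "enn2real Ik \<le> enn2real (ennreal (N powr q) * Ih)"
          using IkIh' IhF by (intro enn2real_mono) (auto simp: ennreal_mult_less_top less_top)
        also have "\<dots> = N powr q * enn2real Ih" by (simp add: enn2real_mult)
        finally have le: "enn2real Ik \<le> N powr q * enn2real Ih" .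
        have "enn2real Ik powr (1 / q) \<le> (N powr q * enn2real Ih) powr (1 / q)"
          using le q1 by (intro powr_mono2) auto
        also have "\<dots> = N * enn2real Ih powr (1 / q)"
          using Np q1 by (simp add: powr_mult powr_powr)
        finally have "ennreal (enn2real Ik powr (1 / q)) \<le> ennreal N * ennreal (enn2real Ih powr (1 / q))"
          using Np by (simp add: ennreal_mult[symmetric] ennreal_leI)
        then show ?thesis using Lh Lk IkF IhF by (simp add: cv_def N_def)
      qed
    qed
  qed
qed

lemma borel_measurable_cis[measurable]: "cis \<in> borel_measurable borel"
  by (intro borel_measurable_continuous_onI continuous_intros)

lemma borel_version_complex:
  fixes g :: "'a::euclidean_space \<Rightarrow> complex"
  assumes "g \<in> borel_measurable lebesgue"
  shows "\<exists>g'\<in>borel_measurable borel. AE x in lborel. g x = g' x"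
proof -
  have "(\<lambda>x. Re (g x)) \<in> borel_measurable (completion lborel)" using assms by measurable
  from completion_ex_borel_measurable_real[OF this]
  obtain r where r: "r \<in> borel_measurable lborel" "AE x in lborel. Re (g x) = r x" by blast
  have "(\<lambda>x. Im (g x)) \<in> borel_measurable (completion lborel)" using assms by measurable
  from completion_ex_borel_measurable_real[OF this]
  obtain i where i: "i \<in> borel_measurable lborel" "AE x in lborel. Im (g x) = i x" by blast
  show ?thesis
  proof (intro bexI[of _ "\<lambda>x. Complex (r x) (i x)"])
    show "AE x in lborel. g x = Complex (r x) (i x)"
      using r(2) i(2) by eventually_elim (simp add: complex_eq_iff)
    show "(\<lambda>x. Complex (r x) (i x)) \<in> borel_measurable borel"
      using r(1) i(1) by (simp add: borel_measurable_complex_iff)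
  qed
qed

lemma AE_eq_measurable_completion:
  fixes f g :: "'a \<Rightarrow> 'b::topological_space"
  assumes g[measurable]: "g \<in> borel_measurable M" and ae: "AE x in M. f x = g x"
  shows "f \<in> borel_measurable (completion M)"
proof (rule measurableI)
  fix A :: "'b set" assume A: "A \<in> sets borel"
  have p1: "Measurable.pred (completion M) (\<lambda>x. f x \<noteq> g x)"
    by (rule sets_completion_AE) (use ae in auto)
  have p2: "Measurable.pred (completion M) (\<lambda>x. f x \<noteq> g x \<and> f x \<in> A)"
    by (rule sets_completion_AE) (use ae in auto)
  have gc: "g \<in> borel_measurable (completion M)" by (rule measurable_completion[OF g])
  have p3: "Measurable.pred (completion M) (\<lambda>x. g x \<in> A)"
    using gc A by measurable
  have "Measurable.pred (completion M) (\<lambda>x. (\<not> f x \<noteq> g x \<and> g x \<in> A) \<or> (f x \<noteq> g x \<and> f x \<in> A))"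
    using p1 p2 p3 by measurable
  moreover have "(\<lambda>x. (\<not> f x \<noteq> g x \<and> g x \<in> A) \<or> (f x \<noteq> g x \<and> f x \<in> A)) = (\<lambda>x. f x \<in> A)"
    by auto
  ultimately have "Measurable.pred (completion M) (\<lambda>x. f x \<in> A)" by simp
  then show "f -` A \<inter> space (completion M) \<in> sets (completion M)"
    by (simp add: pred_def vimage_def Int_def conj_commute)
qed simp

lemma iter_completion:
  fixes u v :: "real \<Rightarrow> real \<Rightarrow> complex"
  assumes v[measurable]: "(\<lambda>(\<eta>, \<xi>). v \<eta> \<xi>) \<in> borel_measurable (lborel \<Otimes>\<^sub>M lborel)"
    and ae: "AE \<eta> in lborel. AE \<xi> in lborel. u \<eta> \<xi> = v \<eta> \<xi>"
  shows "(LINT \<eta>|lebesgue. LINT \<xi>|lebesgue. u \<eta> \<xi>) = (LINT \<eta>|lborel. LINT \<xi>|lborel. v \<eta> \<xi>)"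
proof -
  have vm: "v \<eta> \<in> borel_measurable lborel" for \<eta>
    using measurable_Pair2[OF v, of \<eta>] by simp
  have inner: "(LINT \<xi>|lebesgue. u \<eta> \<xi>) = (LINT \<xi>|lborel. v \<eta> \<xi>)"
    if "AE \<xi> in lborel. u \<eta> \<xi> = v \<eta> \<xi>" for \<eta>
  proof -
    have "(LINT \<xi>|lebesgue. u \<eta> \<xi>) = (LINT \<xi>|lebesgue. v \<eta> \<xi>)"
      by (rule integral_cong_AE)
         (auto intro!: AE_eq_measurable_completion[OF vm] that measurable_completion[OF vm] AE_completion)
    also have "\<dots> = (LINT \<xi>|lborel. v \<eta> \<xi>)"
      by (rule integral_completion[OF vm])
    finally show ?thesis .
  qed
  have om: "(\<lambda>\<eta>. LINT \<xi>|lborel. v \<eta> \<xi>) \<in> borel_measurable lborel"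
    by measurable
  have aeo: "AE \<eta> in lborel. (LINT \<xi>|lebesgue. u \<eta> \<xi>) = (LINT \<xi>|lborel. v \<eta> \<xi>)"
    using ae by eventually_elim (rule inner)
  have "(LINT \<eta>|lebesgue. LINT \<xi>|lebesgue. u \<eta> \<xi>) = (LINT \<eta>|lebesgue. LINT \<xi>|lborel. v \<eta> \<xi>)"
    by (rule integral_cong_AE)
       (auto intro!: AE_eq_measurable_completion[OF om] aeo measurable_completion[OF om] AE_completion)
  also have "\<dots> = (LINT \<eta>|lborel. LINT \<xi>|lborel. v \<eta> \<xi>)"
    by (rule integral_completion[OF om])
  finally show ?thesis .
qed

lemma supp_bound:
  fixes F :: "real \<Rightarrow> complex"
  assumes c: "continuous_on UNIV F" and k: "compact (closure {\<xi>. F \<xi> \<noteq> 0})"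
  shows "\<exists>R B. 0 \<le> R \<and> 0 \<le> B \<and> (\<forall>\<xi>. F \<xi> \<noteq> 0 \<longrightarrow> \<bar>\<xi>\<bar> \<le> R) \<and> (\<forall>\<xi>. norm (F \<xi>) \<le> B)"
proof -
  define S where "S = closure {\<xi>. F \<xi> \<noteq> 0}"
  have "bounded S" using compact_imp_bounded[OF k] unfolding S_def .
  then obtain R where R: "\<forall>x\<in>S. norm x \<le> R" unfolding bounded_iff by blast
  have "compact (F ` S)" using k unfolding S_def by (intro compact_continuous_image continuous_on_subset[OF c]) auto
  then have "bounded (F ` S)" by (rule compact_imp_bounded)
  then obtain B where B: "\<forall>y\<in>F ` S. norm y \<le> B" unfolding bounded_iff by blast
  have sub: "\<xi> \<in> S" if "F \<xi> \<noteq> 0" for \<xi>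
    using that closure_subset[of "{\<xi>. F \<xi> \<noteq> 0}"] unfolding S_def by (simp add: subset_iff)
  have r: "\<bar>\<xi>\<bar> \<le> max R 0" if "F \<xi> \<noteq> 0" for \<xi>
    using R sub[OF that] by (simp add: le_max_iff_disj)
  have b: "norm (F \<xi>) \<le> max B 0" for \<xi>
  proof (cases "F \<xi> = 0")
    case False
    then have "F \<xi> \<in> F ` S" using sub by blast
    then have "norm (F \<xi>) \<le> B" using B by blast
    then show ?thesis by simp
  qed simp
  have "0 \<le> max R 0" "0 \<le> max B 0" by simp_all
  then show ?thesis using r b by blast
qed

lemma key2:
  fixes M \<phi>b Pb :: "real \<Rightarrow> complex" and Mb2 :: "real \<times> real \<Rightarrow> complex"
    and f g :: "real \<Rightarrow> complex" and p :: ennreal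
  assumes \<phi>b[measurable]: "\<phi>b \<in> borel_measurable borel" and \<phi>bi: "integrable lborel \<phi>b"
    and Pb: "Pb = (\<lambda>z. LINT y|lborel. \<phi>b y * cis (-2*pi*y*z))"
    and Mb2[measurable]: "Mb2 \<in> borel_measurable borel"
    and aeM: "AE \<eta> in lborel. AE \<xi> in lborel. M (\<xi> - \<eta>) = Mb2 (\<xi>, \<eta>)"
    and Mloc: "\<And>R. integrable lborel (\<lambda>p. indicator (cbox (-R,-R) (R,R)) p *\<^sub>R Mb2 p)"
    and f: "f \<in> classP" and g: "g \<in> classP" and p: "1 \<le> p"
  shows "Lp_norm p (bilin_op (\<lambda>(\<xi>,\<eta>). M (\<xi> - \<eta>) * Pb (\<xi> + \<eta>)) f g)
     \<le> ennreal (LINT y|lborel. norm (\<phi>b y)) * Lp_norm p (bilin_op (\<lambda>(\<xi>,\<eta>). M (\<xi> - \<eta>)) f g)"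
proof -
  define F where "F = fourier f"
  define G where "G = fourier g"
  have Fc: "continuous_on UNIV F" "compact (closure {\<xi>. F \<xi> \<noteq> 0})"
    using f by (auto simp: classP_def F_def)
  have Gc: "continuous_on UNIV G" "compact (closure {\<xi>. G \<xi> \<noteq> 0})"
    using g by (auto simp: classP_def G_def)
  have Fm[measurable]: "F \<in> borel_measurable borel" by (rule borel_measurable_continuous_onI[OF Fc(1)])
  have Gm[measurable]: "G \<in> borel_measurable borel" by (rule borel_measurable_continuous_onI[OF Gc(1)])
  obtain RF BF where RF: "0 \<le> BF" "\<And>\<xi>. F \<xi> \<noteq> 0 \<Longrightarrow> \<bar>\<xi>\<bar> \<le> RF" "\<And>\<xi>. norm (F \<xi>) \<le> BF"
    using supp_bound[OF Fc] by blast
  obtain RG BG where RG: "0 \<le> BG" "\<And>\<xi>. G \<xi> \<noteq> 0 \<Longrightarrow> \<bar>\<xi>\<bar> \<le> RG" "\<And>\<xi>. norm (G \<xi>) \<le> BG"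
    using supp_bound[OF Gc] by blast
  define R where "R = max RF RG"
  define B where "B = max BF BG"
  have B0: "0 \<le> B" using RF by (simp add: B_def le_max_iff_disj)
  have FR: "F \<xi> \<noteq> 0 \<Longrightarrow> \<bar>\<xi>\<bar> \<le> R" for \<xi> using RF(2)[of \<xi>] by (simp add: R_def le_max_iff_disj)
  have GR: "G \<xi> \<noteq> 0 \<Longrightarrow> \<bar>\<xi>\<bar> \<le> R" for \<xi> using RG(2)[of \<xi>] by (simp add: R_def le_max_iff_disj)
  have FB: "norm (F \<xi>) \<le> B" for \<xi> using RF(3)[of \<xi>] by (simp add: B_def le_max_iff_disj)
  have GB: "norm (G \<xi>) \<le> B" for \<xi> using RG(3)[of \<xi>] by (simp add: B_def le_max_iff_disj)
  define K where "K = cbox (-R,-R) (R,R)"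
  define W where "W = (\<lambda>\<eta> \<xi>. F \<xi> * G \<eta> * Mb2 (\<xi>, \<eta>))"
  define E where "E = (\<lambda>z \<eta> \<xi>::real. cis (2*pi*(\<xi>+\<eta>)*z))"
  have Pbm[measurable]: "Pb \<in> borel_measurable borel" unfolding Pb by measurable
  define N where "N = (LINT y|lborel. norm (\<phi>b y))"
  have inorm: "integrable lborel (\<lambda>y. norm (\<phi>b y))" using \<phi>bi by simp
  have N0: "0 \<le> N" unfolding N_def by simp
  have nE: "norm (E z \<eta> \<xi>) = 1" for z \<eta> \<xi> by (simp add: E_def)

  have MK: "integrable (lborel \<Otimes>\<^sub>M lborel) (\<lambda>p. indicator K p *\<^sub>R Mb2 p)"
    using Mloc[of R] by (simp add: lborel_prod K_def)
  have MK': "integrable (lborel \<Otimes>\<^sub>M lborel) (\<lambda>(\<eta>,\<xi>). indicator K (\<xi>,\<eta>) *\<^sub>R Mb2 (\<xi>,\<eta>))"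
    using lborel_pair.integrable_product_swap[OF MK] by simp
  have Wint: "integrable (lborel \<Otimes>\<^sub>M lborel) (\<lambda>(\<eta>,\<xi>). W \<eta> \<xi>)"
  proof (rule Bochner_Integration.integrable_bound[OF integrable_scaleR_right[OF MK', of "B*B"]])
    show "(\<lambda>(\<eta>,\<xi>). W \<eta> \<xi>) \<in> borel_measurable (lborel \<Otimes>\<^sub>M lborel)"
      unfolding W_def by measurable
    have pw: "norm (W \<eta> \<xi>) \<le> B * B * (indicator K (\<xi>,\<eta>) * norm (Mb2 (\<xi>,\<eta>)))" for \<eta> \<xi>
    proof (cases "F \<xi> = 0 \<or> G \<eta> = 0")
      case True then show ?thesis using B0 by (auto simp: W_def)
    next
      case False
      then have "(\<xi>,\<eta>) \<in> K" using FR[of \<xi>] GR[of \<eta>] by (auto simp: K_def cbox_Pair_iff abs_le_iff)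
      moreover have "norm (F \<xi>) * norm (G \<eta>) \<le> B * B"
        using FB GB B0 by (intro mult_mono) auto
      ultimately show ?thesis using B0
        by (auto simp: W_def norm_mult intro!: mult_right_mono)
    qed
    show "AE x in lborel \<Otimes>\<^sub>M lborel. norm ((\<lambda>(\<eta>,\<xi>). W \<eta> \<xi>) x)
        \<le> norm ((B*B) *\<^sub>R (\<lambda>(\<eta>,\<xi>). indicator K (\<xi>,\<eta>) *\<^sub>R Mb2 (\<xi>,\<eta>)) x)"
      using pw B0 by (intro AE_I2) (auto simp: split_beta mult.assoc)
  qed
  have Wae: "AE \<eta> in lborel. integrable lborel (W \<eta>)"
    using lborel_pair.AE_integrable_fst'[OF Wint] by simp
  have Wn: "integrable lborel (\<lambda>\<eta>. LINT \<xi>|lborel. norm (W \<eta> \<xi>))"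
    using lborel_pair.integrable_fst'[OF integrable_norm[OF Wint]] by (simp add: case_prod_beta)
  define J where "J \<eta> = (LINT \<xi>|lborel. norm (W \<eta> \<xi>))" for \<eta>
  define I where "I \<eta> z = (LINT \<xi>|lborel. W \<eta> \<xi> * E z \<eta> \<xi>)" for \<eta> z
  have Jm[measurable]: "J \<in> borel_measurable borel" unfolding J_def W_def by measurable
  have J0: "0 \<le> J \<eta>" for \<eta> unfolding J_def by simp
  have IJ: "norm (I \<eta> z) \<le> J \<eta>" for \<eta> z
    unfolding I_def J_def using integral_norm_bound[of lborel "\<lambda>\<xi>. W \<eta> \<xi> * E z \<eta> \<xi>"]
    by (simp add: norm_mult nE)
  have Wn': "integrable lborel J" using Wn by (simp add: J_def[abs_def])
  define hb where "hb z = (LINT \<eta>|lborel. I \<eta> z)" for z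
  define Hc where "Hc = (LINT \<eta>|lborel. J \<eta>)"
  have hbm[measurable]: "hb \<in> borel_measurable borel"
    unfolding hb_def I_def W_def E_def by measurable
  have hbb: "norm (hb z) \<le> Hc" for z
  proof -
    have im: "(\<lambda>\<eta>. I \<eta> z) \<in> borel_measurable lborel" unfolding I_def W_def E_def by measurable
    have "norm (hb z) \<le> (LINT \<eta>|lborel. norm (I \<eta> z))"
      unfolding hb_def by (rule integral_norm_bound)
    also have "\<dots> \<le> Hc" unfolding Hc_def
    proof (rule integral_mono[OF _ Wn'])
      show "integrable lborel (\<lambda>\<eta>. norm (I \<eta> z))"
        by (rule Bochner_Integration.integrable_bound[OF Wn']) (use im IJ J0 in auto)
    qed (use IJ in auto)
    finally show ?thesis .
  qed
  define kb where "kb x = (LINT \<eta>|lborel. LINT \<xi>|lborel. W \<eta> \<xi> * Pb (\<xi> + \<eta>) * E x \<eta> \<xi>)" for x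
  have h_eq: "bilin_op (\<lambda>(\<xi>,\<eta>). M (\<xi> - \<eta>)) f g = hb"
  proof
    fix x
    show "bilin_op (\<lambda>(\<xi>,\<eta>). M (\<xi> - \<eta>)) f g x = hb x"
      unfolding bilin_op_def hb_def I_def F_def[symmetric] G_def[symmetric]
    proof (rule iter_completion)
      show "(\<lambda>(\<eta>, \<xi>). W \<eta> \<xi> * E x \<eta> \<xi>) \<in> borel_measurable (lborel \<Otimes>\<^sub>M lborel)"
        unfolding W_def E_def by measurable
      show "AE \<eta> in lborel. AE \<xi> in lborel. F \<xi> * G \<eta> * (case (\<xi>, \<eta>) of (\<xi>, \<eta>) \<Rightarrow> M (\<xi> - \<eta>)) * cis (2 * pi * (\<xi> + \<eta>) * x) = W \<eta> \<xi> * E x \<eta> \<xi>"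
        using aeM by (auto elim!: eventually_mono simp: W_def E_def)
    qed
  qed
  have k_eq: "bilin_op (\<lambda>(\<xi>,\<eta>). M (\<xi> - \<eta>) * Pb (\<xi> + \<eta>)) f g = kb"
  proof
    fix x
    show "bilin_op (\<lambda>(\<xi>,\<eta>). M (\<xi> - \<eta>) * Pb (\<xi> + \<eta>)) f g x = kb x"
      unfolding bilin_op_def kb_def F_def[symmetric] G_def[symmetric]
    proof (rule iter_completion)
      show "(\<lambda>(\<eta>, \<xi>). W \<eta> \<xi> * Pb (\<xi> + \<eta>) * E x \<eta> \<xi>) \<in> borel_measurable (lborel \<Otimes>\<^sub>M lborel)"
        unfolding W_def E_def by measurable
      show "AE \<eta> in lborel. AE \<xi> in lborel. F \<xi> * G \<eta> * (case (\<xi>, \<eta>) of (\<xi>, \<eta>) \<Rightarrow> M (\<xi> - \<eta>) * Pb (\<xi> + \<eta>)) * cis (2 * pi * (\<xi> + \<eta>) * x) = W \<eta> \<xi> * Pb (\<xi> + \<eta>) * E x \<eta> \<xi>"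
        using aeM by (auto elim!: eventually_mono simp: W_def E_def)
    qed
  qed
  have conv: "kb x = (LINT y|lborel. \<phi>b y * hb (x - y))" for x
  proof -
    have cisE: "E (x - y) \<eta> \<xi> = E x \<eta> \<xi> * cis (-2*pi*y*(\<xi>+\<eta>))" for y \<eta> \<xi>
      unfolding E_def cis_mult by (simp add: algebra_simps)
    have inner: "(LINT \<xi>|lborel. W \<eta> \<xi> * Pb (\<xi>+\<eta>) * E x \<eta> \<xi>) = (LINT y|lborel. \<phi>b y * I \<eta> (x - y))"
      if Wi: "integrable lborel (W \<eta>)" for \<eta>
    proof -
      define Q where "Q = (\<lambda>\<xi> y. \<phi>b y * (W \<eta> \<xi> * E (x - y) \<eta> \<xi>))"
      have e1: "W \<eta> \<xi> * Pb (\<xi>+\<eta>) * E x \<eta> \<xi> = (LINT y|lborel. Q \<xi> y)" for \<xi>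
      proof -
        have "(LINT y|lborel. Q \<xi> y) = (LINT y|lborel. (W \<eta> \<xi> * E x \<eta> \<xi>) * (\<phi>b y * cis (-2*pi*y*(\<xi>+\<eta>))))"
          unfolding Q_def cisE by (rule Bochner_Integration.integral_cong) (simp_all add: ac_simps)
        also have "\<dots> = (W \<eta> \<xi> * E x \<eta> \<xi>) * Pb (\<xi>+\<eta>)" by (simp add: Pb)
        finally show ?thesis by (simp add: ac_simps)
      qed
      have Qm: "(\<lambda>(\<xi>,y). Q \<xi> y) \<in> borel_measurable (lborel \<Otimes>\<^sub>M lborel)"
        unfolding Q_def W_def E_def by measurable
      have nQ: "norm (Q \<xi> y) = norm (W \<eta> \<xi>) * norm (\<phi>b y)" for \<xi> y
        by (simp add: Q_def norm_mult nE)
      have Qint: "integrable (lborel \<Otimes>\<^sub>M lborel) (\<lambda>(\<xi>,y). Q \<xi> y)"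
      proof (rule lborel_pair.Fubini_integrable[OF Qm])
        have "(\<lambda>\<xi>. LINT y|lborel. norm ((\<lambda>(\<xi>,y). Q \<xi> y) (\<xi>,y))) = (\<lambda>\<xi>. norm (W \<eta> \<xi>) * N)"
          by (simp add: nQ N_def)
        moreover have "integrable lborel (\<lambda>\<xi>. norm (W \<eta> \<xi>) * N)"
          using Wi by simp
        ultimately show "integrable lborel (\<lambda>\<xi>. LINT y|lborel. norm ((\<lambda>(\<xi>,y). Q \<xi> y) (\<xi>,y)))"
          by simp
        have "integrable lborel (\<lambda>y. Q \<xi> y)" for \<xi>
        proof (rule Bochner_Integration.integrable_bound[OF integrable_mult_right[OF inorm, of "norm (W \<eta> \<xi>)"]])
          show "(\<lambda>y. Q \<xi> y) \<in> borel_measurable lborel" unfolding Q_def W_def E_def by measurable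
        qed (auto simp: nQ)
        then show "AE \<xi> in lborel. integrable lborel (\<lambda>y. (\<lambda>(\<xi>,y). Q \<xi> y) (\<xi>,y))"
          by simp
      qed
      have "(LINT \<xi>|lborel. W \<eta> \<xi> * Pb (\<xi>+\<eta>) * E x \<eta> \<xi>) = (LINT \<xi>|lborel. LINT y|lborel. Q \<xi> y)"
        using e1 by simp
      also have "\<dots> = (LINT y|lborel. LINT \<xi>|lborel. Q \<xi> y)"
        using lborel_pair.Fubini_integral[OF Qint] by simp
      also have "\<dots> = (LINT y|lborel. \<phi>b y * I \<eta> (x - y))"
        by (simp add: Q_def I_def)
      finally show ?thesis .
    qed
    have Tm: "(\<lambda>(\<eta>,y). \<phi>b y * I \<eta> (x - y)) \<in> borel_measurable (lborel \<Otimes>\<^sub>M lborel)"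
      unfolding I_def W_def E_def by measurable
    have Tb: "norm (\<phi>b y * I \<eta> (x - y)) \<le> norm (\<phi>b y) * J \<eta>" for \<eta> y
      using IJ[of \<eta> "x - y"] by (simp add: norm_mult mult_left_mono)
    have Ti: "integrable lborel (\<lambda>y. \<phi>b y * I \<eta> (x - y))" for \<eta>
    proof (rule Bochner_Integration.integrable_bound[OF integrable_mult_left[OF inorm, of "J \<eta>"]])
      show "(\<lambda>y. \<phi>b y * I \<eta> (x - y)) \<in> borel_measurable lborel" unfolding I_def W_def E_def by measurable
    qed (use Tb J0 in \<open>auto simp: abs_mult\<close>)
    have Tint: "integrable (lborel \<Otimes>\<^sub>M lborel) (\<lambda>(\<eta>,y). \<phi>b y * I \<eta> (x - y))"
    proof (rule lborel_pair.Fubini_integrable[OF Tm])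
      show "AE \<eta> in lborel. integrable lborel (\<lambda>y. (\<lambda>(\<eta>,y). \<phi>b y * I \<eta> (x - y)) (\<eta>,y))"
        using Ti by simp
      show "integrable lborel (\<lambda>\<eta>. LINT y|lborel. norm ((\<lambda>(\<eta>,y). \<phi>b y * I \<eta> (x - y)) (\<eta>,y)))"
      proof (rule Bochner_Integration.integrable_bound[OF integrable_mult_right[OF Wn', of N]])
        show "(\<lambda>\<eta>. LINT y|lborel. norm ((\<lambda>(\<eta>,y). \<phi>b y * I \<eta> (x - y)) (\<eta>,y))) \<in> borel_measurable lborel"
          unfolding I_def W_def E_def by measurable
        have "norm (LINT y|lborel. norm (\<phi>b y * I \<eta> (x - y))) \<le> norm (N * J \<eta>)" for \<eta>
        proof -
          have "norm (LINT y|lborel. norm (\<phi>b y * I \<eta> (x - y))) = (LINT y|lborel. norm (\<phi>b y * I \<eta> (x - y)))"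
            by (simp add: integral_nonneg_AE)
          also have "\<dots> \<le> (LINT y|lborel. norm (\<phi>b y) * J \<eta>)"
            by (rule integral_mono) (use Ti Tb inorm in auto)
          also have "\<dots> = N * J \<eta>" by (simp add: N_def)
          also have "\<dots> \<le> norm (N * J \<eta>)" by simp
          finally show ?thesis .
        qed
        then show "AE \<eta> in lborel. norm (LINT y|lborel. norm ((\<lambda>(\<eta>,y). \<phi>b y * I \<eta> (x - y)) (\<eta>,y))) \<le> norm (N * J \<eta>)"
          by simp
      qed
    qed
    have "kb x = (LINT \<eta>|lborel. LINT y|lborel. \<phi>b y * I \<eta> (x - y))"
      unfolding kb_def
    proof (rule integral_cong_AE)
      show "(\<lambda>\<eta>. LINT \<xi>|lborel. W \<eta> \<xi> * Pb (\<xi> + \<eta>) * E x \<eta> \<xi>) \<in> borel_measurable lborel"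
        unfolding W_def E_def by measurable
      show "(\<lambda>\<eta>. LINT y|lborel. \<phi>b y * I \<eta> (x - y)) \<in> borel_measurable lborel"
        unfolding I_def W_def E_def by measurable
      show "AE \<eta> in lborel. (LINT \<xi>|lborel. W \<eta> \<xi> * Pb (\<xi> + \<eta>) * E x \<eta> \<xi>) = (LINT y|lborel. \<phi>b y * I \<eta> (x - y))"
        using Wae by eventually_elim (rule inner)
    qed
    also have "\<dots> = (LINT y|lborel. LINT \<eta>|lborel. \<phi>b y * I \<eta> (x - y))"
      using lborel_pair.Fubini_integral[OF Tint] by simp
    also have "\<dots> = (LINT y|lborel. \<phi>b y * hb (x - y))"
      by (simp add: hb_def)
    finally show ?thesis .
  qed
  have "kb = (\<lambda>x. LINT y|lborel. \<phi>b y * hb (x - y))" using conv by auto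
  then show ?thesis
    using conv_Lp_bound[OF \<phi>b \<phi>bi hbm hbb p] h_eq k_eq by (simp add: N_def)
qed

theorem mainTheorem9:
  fixes p1 p2 p3 :: ennreal and \<phi> :: "real \<Rightarrow> complex" and M :: "real \<Rightarrow> complex"
  assumes "1 \<le> p1" and "1 \<le> p2" and "1 \<le> p3"
    and "integrable lebesgue \<phi>"
    and "M \<in> Mtilde p1 p2 p3"
  shows "(\<lambda>(\<xi>, \<eta>). M (\<xi> - \<eta>) * fourier \<phi> (\<xi> + \<eta>)) \<in> BM p1 p2 p3 \<and>
         bm_norm p1 p2 p3 (\<lambda>(\<xi>, \<eta>). M (\<xi> - \<eta>) * fourier \<phi> (\<xi> + \<eta>))
           \<le> (LINT x|lebesgue. norm (\<phi> x)) * mtilde_norm p1 p2 p3 M"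
proof -
  define Mt where "Mt = (\<lambda>(\<xi>::real, \<eta>::real). M (\<xi> - \<eta>))"
  have MtBM: "Mt \<in> BM p1 p2 p3" using assms(5) by (simp add: Mtilde_def Mt_def)
  then have li2: "loc_int2 Mt" and exC: "\<exists>C. bm_bound p1 p2 p3 Mt C" by (auto simp: BM_def)
  have Mtl: "Mt \<in> borel_measurable lebesgue" and Mtloc: "\<And>K. compact K \<Longrightarrow> set_integrable lebesgue K Mt"
    using li2 by (auto simp: loc_int2_def)
  have \<phi>l: "\<phi> \<in> borel_measurable lebesgue" using assms(4) by auto
  obtain \<phi>b where \<phi>b[measurable]: "\<phi>b \<in> borel_measurable borel" and \<phi>ae: "AE x in lborel. \<phi> x = \<phi>b x"
    using borel_version_complex[OF \<phi>l] by blast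
  have \<phi>bi: "integrable lborel \<phi>b"
  proof -
    have "integrable lebesgue \<phi>b"
    proof (rule integrable_cong_AE_imp[OF assms(4)])
      show "\<phi>b \<in> borel_measurable lebesgue" by (rule measurable_completion) measurable
      show "AE x in lebesgue. \<phi> x = \<phi>b x" by (rule AE_completion[OF \<phi>ae])
    qed
    then show ?thesis by (simp add: integrable_completion)
  qed
  define N where "N = (LINT x|lebesgue. norm (\<phi> x))"
  have N_eq: "N = (LINT x|lborel. norm (\<phi>b x))"
  proof -
    have "N = (LINT x|lebesgue. norm (\<phi>b x))"
      unfolding N_def
    proof (rule integral_cong_AE)
      show "(\<lambda>x. norm (\<phi> x)) \<in> borel_measurable lebesgue" using \<phi>l by measurable
      show "(\<lambda>x. norm (\<phi>b x)) \<in> borel_measurable lebesgue" by (rule measurable_completion) measurable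
      show "AE x in lebesgue. norm (\<phi> x) = norm (\<phi>b x)" by (rule AE_completion) (use \<phi>ae in \<open>auto elim!: eventually_mono\<close>)
    qed
    also have "\<dots> = (LINT x|lborel. norm (\<phi>b x))" by (rule integral_completion) measurable
    finally show ?thesis .
  qed
  have N0: "0 \<le> N" unfolding N_def by simp
  define Pb where "Pb = (\<lambda>z. LINT y|lborel. \<phi>b y * cis (-2*pi*y*z))"
  have Pbm[measurable]: "Pb \<in> borel_measurable borel" unfolding Pb_def by measurable
  have fP: "fourier \<phi> z = Pb z" for z
  proof -
    have "fourier \<phi> z = (LINT x|lebesgue. \<phi>b x * cis (- 2 * pi * x * z))"
      unfolding fourier_def
    proof (rule integral_cong_AE)
      have "(\<lambda>x. cis (- 2 * pi * x * z)) \<in> borel_measurable lebesgue" by (rule measurable_completion) measurable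
      then show "(\<lambda>x. \<phi> x * cis (- 2 * pi * x * z)) \<in> borel_measurable lebesgue" using \<phi>l by measurable
      show "(\<lambda>x. \<phi>b x * cis (- 2 * pi * x * z)) \<in> borel_measurable lebesgue" by (rule measurable_completion) measurable
      show "AE x in lebesgue. \<phi> x * cis (- 2 * pi * x * z) = \<phi>b x * cis (- 2 * pi * x * z)" by (rule AE_completion) (use \<phi>ae in \<open>auto elim!: eventually_mono\<close>)
    qed
    also have "\<dots> = Pb z" unfolding Pb_def by (rule integral_completion) measurable
    finally show ?thesis .
  qed
  have PbN: "norm (Pb z) \<le> N" for z
    unfolding N_eq Pb_def using integral_norm_bound[of lborel "\<lambda>y. \<phi>b y * cis (-2*pi*y*z)"]
    by (simp add: norm_mult)
  obtain Mb2 where Mb2[measurable]: "Mb2 \<in> borel_measurable borel" and Mae: "AE p in lborel. Mt p = Mb2 p"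
    using borel_version_complex[OF Mtl] by blast
  obtain N0 where N0s: "N0 \<in> null_sets lborel" "{p \<in> space lborel. Mt p \<noteq> Mb2 p} \<subseteq> N0"
    using Mae unfolding eventually_ae_filter by blast
  have aeM: "AE \<eta> in lborel. AE \<xi> in lborel. M (\<xi> - \<eta>) = Mb2 (\<xi>, \<eta>)"
  proof -
    have N0p: "N0 \<in> sets (lborel \<Otimes>\<^sub>M lborel)" by (subst lborel_prod) (rule null_setsD2[OF N0s(1)])
    have "AE p in lborel. p \<notin> N0" using N0s(1) by (rule AE_not_in)
    then have "AE p in lborel \<Otimes>\<^sub>M lborel. p \<notin> N0" by (subst lborel_prod)
    then have "AE \<xi> in lborel. AE \<eta> in lborel. (\<xi>, \<eta>) \<notin> N0" by (rule lborel_pair.AE_pair)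
    moreover have "{x \<in> space (lborel \<Otimes>\<^sub>M lborel). (fst x, snd x) \<notin> N0} \<in> sets (lborel \<Otimes>\<^sub>M lborel)"
      using N0p by measurable
    ultimately have "AE \<eta> in lborel. AE \<xi> in lborel. (\<xi>, \<eta>) \<notin> N0"
      using lborel_pair.AE_commute[of "\<lambda>\<xi> \<eta>. (\<xi>, \<eta>) \<notin> N0"] by simp
    moreover have bad: "M (\<xi> - \<eta>) = Mb2 (\<xi>, \<eta>)" if "(\<xi>, \<eta>) \<notin> N0" for \<xi> \<eta>
    proof -
      have "(\<xi>, \<eta>) \<notin> {p \<in> space lborel. Mt p \<noteq> Mb2 p}" using N0s(2) that by blast
      then have "Mt (\<xi>, \<eta>) = Mb2 (\<xi>, \<eta>)" by simp
      then show ?thesis by (simp add: Mt_def)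
    qed
    ultimately show ?thesis
      by (auto elim!: eventually_mono)
  qed
  have Mloc: "integrable lborel (\<lambda>p. indicator (cbox (-R,-R) (R,R)) p *\<^sub>R Mb2 p)" for R :: real
  proof -
    have "set_integrable lebesgue (cbox (-R,-R) (R,R)) Mt" by (rule Mtloc) simp
    then have "integrable lebesgue (\<lambda>p. indicator (cbox (-R,-R) (R,R)) p *\<^sub>R Mt p)"
      by (simp add: set_integrable_def)
    then have "integrable lebesgue (\<lambda>p. indicator (cbox (-R,-R) (R,R)) p *\<^sub>R Mb2 p)"
    proof (rule integrable_cong_AE_imp)
      show "(\<lambda>p. indicator (cbox (-R,-R) (R,R)) p *\<^sub>R Mb2 p) \<in> borel_measurable lebesgue"
        by (rule measurable_completion) measurable
      show "AE x in lebesgue. indicator (cbox (-R,-R) (R,R)) x *\<^sub>R Mt x = indicator (cbox (-R,-R) (R,R)) x *\<^sub>R Mb2 x"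
        by (rule AE_completion) (use Mae in \<open>auto elim!: eventually_mono\<close>)
    qed
    then show ?thesis by (simp add: integrable_completion)
  qed
  define m where "m = (\<lambda>(\<xi>, \<eta>). M (\<xi> - \<eta>) * fourier \<phi> (\<xi> + \<eta>))"
  have m_eq: "m = (\<lambda>(\<xi>, \<eta>). M (\<xi> - \<eta>) * Pb (\<xi> + \<eta>))" by (simp add: m_def fP)
  have m_eq2: "m = (\<lambda>p. Mt p * Pb (fst p + snd p))" by (auto simp: m_eq Mt_def)
  have lm: "loc_int2 m"
    unfolding loc_int2_def
  proof safe
    have "(\<lambda>p::real\<times>real. fst p + snd p) \<in> borel_measurable borel"
      by (intro borel_measurable_continuous_onI continuous_intros)
    then have "(\<lambda>p::real\<times>real. Pb (fst p + snd p)) \<in> borel_measurable borel"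
      using Pbm by (rule measurable_compose)
    then have "(\<lambda>p::real\<times>real. Pb (fst p + snd p)) \<in> borel_measurable lebesgue"
      by (intro measurable_completion) simp
    then show mm: "m \<in> borel_measurable lebesgue" unfolding m_eq2 using Mtl by measurable
    fix K :: "(real \<times> real) set" assume K: "compact K"
    have "integrable lebesgue (\<lambda>p. N *\<^sub>R (indicator K p *\<^sub>R Mt p))"
    proof -
      have "integrable lebesgue (\<lambda>p. indicator K p *\<^sub>R Mt p)"
        using Mtloc[OF K] by (simp add: set_integrable_def)
      from integrable_scaleR_right[OF this, of N] show ?thesis by simp
    qed
    then show "set_integrable lebesgue K m"
      unfolding set_integrable_def
    proof (rule Bochner_Integration.integrable_bound)
      show "(\<lambda>p. indicator K p *\<^sub>R m p) \<in> borel_measurable lebesgue"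
      proof -
        have Ks: "K \<in> sets lebesgue" using lmeasurable_compact[OF K] by (simp add: fmeasurable_def)
        have "indicator K \<in> borel_measurable lebesgue" using Ks by (rule borel_measurable_indicator)
        then show ?thesis using mm by measurable
      qed
      show "AE p in lebesgue. norm (indicator K p *\<^sub>R m p) \<le> norm (N *\<^sub>R (indicator K p *\<^sub>R Mt p))"
        using PbN N0 by (intro AE_I2) (auto simp: m_eq2 norm_mult indicator_def mult.commute[of N] intro!: mult_left_mono)
    qed
  qed
  have key: "bm_bound p1 p2 p3 m (N * C)" if C0: "0 \<le> C" and bC: "bm_bound p1 p2 p3 Mt C" for C
    unfolding bm_bound_def
  proof (intro ballI)
    fix f g assume f: "f \<in> classP" and g: "g \<in> classP"
    have "Lp_norm p3 (bilin_op m f g) \<le> ennreal N * Lp_norm p3 (bilin_op Mt f g)"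
      using key2[OF \<phi>b \<phi>bi Pb_def Mb2 aeM Mloc f g assms(3)] by (simp add: m_eq Mt_def N_eq)
    also have "\<dots> \<le> ennreal N * (ennreal C * Lp_norm p1 f * Lp_norm p2 g)"
      using bC f g unfolding bm_bound_def by (intro mult_left_mono) auto
    also have "\<dots> = ennreal (N * C) * Lp_norm p1 f * Lp_norm p2 g"
      using N0 C0 by (simp add: ennreal_mult mult.assoc)
    finally show "Lp_norm p3 (bilin_op m f g) \<le> ennreal (N * C) * Lp_norm p1 f * Lp_norm p2 g" .
  qed
  obtain C1 where C1: "bm_bound p1 p2 p3 Mt C1" using exC by blast
  define C0 where "C0 = max C1 0"
  have C00: "0 \<le> C0" by (simp add: C0_def)
  have C0b: "bm_bound p1 p2 p3 Mt C0"
    unfolding bm_bound_def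
  proof (intro ballI)
    fix f g assume f: "f \<in> classP" and g: "g \<in> classP"
    have "Lp_norm p3 (bilin_op Mt f g) \<le> ennreal C1 * Lp_norm p1 f * Lp_norm p2 g"
      using C1 f g unfolding bm_bound_def by auto
    also have "\<dots> \<le> ennreal C0 * Lp_norm p1 f * Lp_norm p2 g"
      by (intro mult_right_mono ennreal_leI) (auto simp: C0_def)
    finally show "Lp_norm p3 (bilin_op Mt f g) \<le> ennreal C0 * Lp_norm p1 f * Lp_norm p2 g" .
  qed
  have mBM: "m \<in> BM p1 p2 p3" using lm key[OF C00 C0b] by (auto simp: BM_def)
  define S where "S = {C. C \<ge> 0 \<and> bm_bound p1 p2 p3 Mt C}"
  define T where "T = {C. C \<ge> 0 \<and> bm_bound p1 p2 p3 m C}"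
  have Sne: "S \<noteq> {}" using C0b C00 by (auto simp: S_def)
  have Tle: "bm_norm p1 p2 p3 m \<le> N * C" if "C \<in> S" for C
  proof -
    have "N * C \<in> T" using that key N0 by (auto simp: S_def T_def)
    moreover have "bdd_below T" by (auto simp: T_def bdd_below_def)
    ultimately show ?thesis unfolding bm_norm_def T_def[symmetric] by (rule cInf_lower)
  qed
  have mt: "mtilde_norm p1 p2 p3 M = Inf S" by (simp add: mtilde_norm_def bm_norm_def S_def Mt_def)
  have "bm_norm p1 p2 p3 m \<le> N * mtilde_norm p1 p2 p3 M"
  proof (cases "N = 0")
    case True
    have "C0 \<in> S" using C0b C00 by (simp add: S_def)
    then show ?thesis using Tle True by auto
  next
    case False
    then have Np: "0 < N" using N0 by simp
    have "bm_norm p1 p2 p3 m / N \<le> Inf S"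
    proof (rule cInf_greatest[OF Sne])
      fix C assume "C \<in> S"
      then show "bm_norm p1 p2 p3 m / N \<le> C" using Tle Np by (simp add: divide_le_eq mult.commute)
    qed
    then show ?thesis using Np mt by (simp add: divide_le_eq mult.commute)
  qed
  then show ?thesis using mBM unfolding m_def N_def by simp
qed

end
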